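(* Let $A>0$ and let $\tilde n,\tilde m$ be probability measures on $\mathbb R$ with finite second moment such that $\int y\,\tilde n(dy)=\int y\,\tilde m(dy)$. Then \[W_2\big(T(\tilde n),T(\tilde m)\big)\leq\frac{1}{\sqrt2}\,W_2(\tilde n,\tilde m).\]
   Context: $\Gamma_{A/2}(y):=\frac{1}{\sqrt{2\pi A}}e^{-|y|^2/A}$ (Gaussian density of variance $A/2$). For a probability measure $\tilde n$ on $\mathbb R$ with finite second moment, $T(\tilde n)$ is the probability density \[T(\tilde n)(y):=\int\!\!\int\Gamma_{A/2}\Big(y-\frac{y_*+y_*'}{2}\Big)\,\tilde n(dy_* )\,\tilde n(dy_*').\] $W_2$ is the quadratic Wasserstein distance: $W_2(\mu,\nu)^2=\inf_\pi\int|x-y|^2\,d\pi(x,y)$, infimum over probability measures $\pi$ on $\mathbb R^2$ with marginals $\mu$ and $\nu$. *)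

theory Defs
  imports "HOL-Probability.Probability"
begin

text \<open>Gaussian density of variance A/2 (normalised so that it integrates to 1).\<close>
definition Gamma_half :: "real \<Rightarrow> real \<Rightarrow> real" where
  "Gamma_half A y = exp (- (y\<^sup>2) / A) / sqrt (pi * A)"

definition prob_2 :: "real measure \<Rightarrow> bool" where
  "prob_2 \<mu> \<longleftrightarrow> prob_space \<mu> \<and> sets \<mu> = sets borel \<and> integrable \<mu> (\<lambda>y. y\<^sup>2)"

definition T_op :: "real \<Rightarrow> real measure \<Rightarrow> real measure" where
  "T_op A n = density lborel
     (\<lambda>y. \<integral>\<^sup>+ a. \<integral>\<^sup>+ b. ennreal (Gamma_half A (y - (a + b) / 2)) \<partial>n \<partial>n)"

definition couplings :: "real measure \<Rightarrow> real measure \<Rightarrow> (real \<times> real) measure set" where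
  "couplings \<mu> \<nu> = {\<pi>. prob_space \<pi> \<and> sets \<pi> = sets (borel :: (real \<times> real) measure) \<and>
      distr \<pi> borel fst = \<mu> \<and> distr \<pi> borel snd = \<nu>}"

definition W2_sq :: "real measure \<Rightarrow> real measure \<Rightarrow> ennreal" where
  "W2_sq \<mu> \<nu> = (INF \<pi>\<in>couplings \<mu> \<nu>. \<integral>\<^sup>+ p. ennreal ((fst p - snd p)\<^sup>2) \<partial>\<pi>)"

definition W2 :: "real measure \<Rightarrow> real measure \<Rightarrow> real" where
  "W2 \<mu> \<nu> = sqrt (enn2real (W2_sq \<mu> \<nu>))"

end

theory Submission
  imports Defs
begin

lemma Gamma_half_normal:
  assumes "A > 0"
  shows "Gamma_half A = normal_density 0 (sqrt (A/2))"
proof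
  fix x
  have "2 * pi * (sqrt (A/2))\<^sup>2 = pi * A" using assms by simp
  moreover have "2 * (sqrt (A/2))\<^sup>2 = A" using assms by simp
  ultimately show "Gamma_half A x = normal_density 0 (sqrt (A/2)) x"
    unfolding Gamma_half_def normal_density_def by simp
qed

lemma prob_space_Gamma:
  assumes "A > 0"
  shows "prob_space (density lborel (\<lambda>x. ennreal (Gamma_half A x)))"
  using prob_space_normal_density[of "sqrt (A/2)" 0] assms by (simp add: Gamma_half_normal)

lemma Gamma_half_meas[measurable]: "Gamma_half A \<in> borel_measurable borel"
  unfolding Gamma_half_def[abs_def] by measurable

lemma Gamma_half_nonneg: "A > 0 \<Longrightarrow> Gamma_half A x \<ge> 0"
  unfolding Gamma_half_def by simp

lemma marg:
  fixes \<pi> :: "(real \<times> real) measure" and \<mu> :: "real measure"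
  assumes A: "A > 0" and pi: "prob_space \<pi>" and spi[measurable_cong]: "sets \<pi> = sets (borel :: (real\<times>real) measure)"
    and h[measurable]: "h \<in> borel_measurable (borel :: (real\<times>real) measure)"
    and hd: "distr \<pi> borel h = \<mu>" and mu: "prob_space \<mu>" and smu[measurable_cong]: "sets \<mu> = sets borel"
  shows "distr ((\<pi> \<Otimes>\<^sub>M \<pi>) \<Otimes>\<^sub>M density lborel (\<lambda>x. ennreal (Gamma_half A x)))
           borel (\<lambda>x. (h (fst (fst x)) + h (snd (fst x)))/2 + snd x) = T_op A \<mu>"
proof (rule measure_eqI)
  define N where "N = density lborel (\<lambda>x. ennreal (Gamma_half A x))"
  define G where "G = Gamma_half A"
  have sN[measurable_cong]: "sets N = sets borel" unfolding N_def by simp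
  have h2[measurable]: "h \<in> borel_measurable (borel \<Otimes>\<^sub>M borel)" using h by (simp only: borel_prod)
  have spi2: "sets \<pi> = sets (borel \<Otimes>\<^sub>M borel)" using spi by (simp only: borel_prod)
  have sM: "sets ((\<pi> \<Otimes>\<^sub>M \<pi>) \<Otimes>\<^sub>M N) = sets (((borel \<Otimes>\<^sub>M borel) \<Otimes>\<^sub>M (borel \<Otimes>\<^sub>M borel)) \<Otimes>\<^sub>M borel)"
    by (intro sets_pair_measure_cong spi2 sN)
  have sPP: "sets (\<pi> \<Otimes>\<^sub>M \<pi>) = sets ((borel \<Otimes>\<^sub>M borel) \<Otimes>\<^sub>M (borel \<Otimes>\<^sub>M borel))"
    by (intro sets_pair_measure_cong spi2)
  have gm[measurable]: "(\<lambda>x. (h (fst (fst x)) + h (snd (fst x)))/2 + snd x) \<in> borel_measurable ((\<pi> \<Otimes>\<^sub>M \<pi>) \<Otimes>\<^sub>M N)"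
    by (subst measurable_cong_sets[OF sM refl]) measurable
  have hh[measurable]: "(\<lambda>pq. (h (fst pq), h (snd pq))) \<in> measurable (\<pi> \<Otimes>\<^sub>M \<pi>) (borel \<Otimes>\<^sub>M borel)"
    by (subst measurable_cong_sets[OF sPP refl]) measurable
  interpret N: prob_space N unfolding N_def using prob_space_Gamma[OF A] .
  interpret P: prob_space \<pi> by (rule pi)
  interpret Mu: prob_space \<mu> by (rule mu)
  interpret PP: pair_sigma_finite \<pi> \<pi> ..
  interpret MM: pair_sigma_finite \<mu> \<mu> ..
  interpret PPN: pair_sigma_finite "\<pi> \<Otimes>\<^sub>M \<pi>" N
    using prob_space_pair[OF pi pi] N.prob_space_axioms
    by (simp add: pair_sigma_finite_def prob_space_imp_sigma_finite)
  interpret MML: pair_sigma_finite "\<mu> \<Otimes>\<^sub>M \<mu>" lborel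
    using prob_space_pair[OF mu mu]
    by (simp add: pair_sigma_finite_def prob_space_imp_sigma_finite lborel.sigma_finite_measure_axioms)
  show "sets (distr ((\<pi> \<Otimes>\<^sub>M \<pi>) \<Otimes>\<^sub>M density lborel (\<lambda>x. ennreal (Gamma_half A x))) borel
        (\<lambda>x. (h (fst (fst x)) + h (snd (fst x)))/2 + snd x)) = sets (T_op A \<mu>)"
    unfolding T_op_def by simp
  fix S assume "S \<in> sets (distr ((\<pi> \<Otimes>\<^sub>M \<pi>) \<Otimes>\<^sub>M density lborel (\<lambda>x. ennreal (Gamma_half A x))) borel
        (\<lambda>x. (h (fst (fst x)) + h (snd (fst x)))/2 + snd x))"
  then have S[measurable]: "S \<in> sets borel" by simp
  define F where "F = (\<lambda>(a::real,b::real). \<integral>\<^sup>+ y. ennreal (G (y - (a+b)/2)) * indicator S y \<partial>lborel)"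
  have Fm[measurable]: "F \<in> borel_measurable (borel \<Otimes>\<^sub>M borel)"
    unfolding F_def G_def by measurable
  have "emeasure (distr ((\<pi> \<Otimes>\<^sub>M \<pi>) \<Otimes>\<^sub>M N) borel (\<lambda>x. (h (fst (fst x)) + h (snd (fst x)))/2 + snd x)) S
     = (\<integral>\<^sup>+ x. indicator S x \<partial>(distr ((\<pi> \<Otimes>\<^sub>M \<pi>) \<Otimes>\<^sub>M N) borel (\<lambda>x. (h (fst (fst x)) + h (snd (fst x)))/2 + snd x)))"
    by simp
  also have "\<dots> = (\<integral>\<^sup>+ x. indicator S ((h (fst (fst x)) + h (snd (fst x)))/2 + snd x) \<partial>((\<pi> \<Otimes>\<^sub>M \<pi>) \<Otimes>\<^sub>M N))"
    by (rule nn_integral_distr) (auto intro!: gm borel_measurable_indicator)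
  also have "\<dots> = (\<integral>\<^sup>+ pq. \<integral>\<^sup>+ z. indicator S ((h (fst pq) + h (snd pq)) / 2 + z) \<partial>N \<partial>(\<pi> \<Otimes>\<^sub>M \<pi>))"
    by (subst N.nn_integral_fst[symmetric]) (auto simp: split_beta')
  also have "\<dots> = (\<integral>\<^sup>+ pq. F (h (fst pq), h (snd pq)) \<partial>(\<pi> \<Otimes>\<^sub>M \<pi>))"
  proof (rule nn_integral_cong)
    fix pq
    define c where "c = (h (fst pq) + h (snd pq)) / 2"
    have "(\<integral>\<^sup>+ z. indicator S (c + z) \<partial>N) = (\<integral>\<^sup>+ z. ennreal (G z) * indicator S (c + z) \<partial>lborel)"
      unfolding N_def G_def by (subst nn_integral_density) auto
    also have "\<dots> = (\<integral>\<^sup>+ y. ennreal (G (y - c)) * indicator S y \<partial>lborel)"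
      using nn_integral_real_affine[of "\<lambda>y. ennreal (G (y - c)) * indicator S y" 1 c]
      unfolding G_def by simp
    finally show "(\<integral>\<^sup>+ z. indicator S ((h (fst pq) + h (snd pq)) / 2 + z) \<partial>N) = F (h (fst pq), h (snd pq))"
      unfolding F_def c_def by simp
  qed
  also have "\<dots> = (\<integral>\<^sup>+ ab. F ab \<partial>(distr (\<pi> \<Otimes>\<^sub>M \<pi>) (borel \<Otimes>\<^sub>M borel) (\<lambda>(p,q). (h p, h q))))"
    by (subst nn_integral_distr) (auto simp: split_beta')
  also have "distr (\<pi> \<Otimes>\<^sub>M \<pi>) (borel \<Otimes>\<^sub>M borel) (\<lambda>(p,q). (h p, h q)) = \<mu> \<Otimes>\<^sub>M \<mu>"
    by (subst pair_measure_distr[symmetric]) (auto simp: hd Mu.sigma_finite_measure_axioms)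
  also have "(\<integral>\<^sup>+ ab. F ab \<partial>(\<mu> \<Otimes>\<^sub>M \<mu>)) =
     (\<integral>\<^sup>+ y. \<integral>\<^sup>+ ab. ennreal (G (y - (fst ab + snd ab)/2)) * indicator S y \<partial>(\<mu> \<Otimes>\<^sub>M \<mu>) \<partial>lborel)"
    unfolding F_def split_beta' by (subst MML.Fubini') (auto simp: G_def)
  also have "\<dots> = (\<integral>\<^sup>+ y. (\<integral>\<^sup>+ a. \<integral>\<^sup>+ b. ennreal (G (y - (a + b)/2)) \<partial>\<mu> \<partial>\<mu>) * indicator S y \<partial>lborel)"
  proof (intro nn_integral_cong)
    fix y
    have "(\<integral>\<^sup>+ a. \<integral>\<^sup>+ b. ennreal (G (y - (a + b)/2)) \<partial>\<mu> \<partial>\<mu>) * indicator S y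
       = (\<integral>\<^sup>+ a. (\<integral>\<^sup>+ b. ennreal (G (y - (a + b)/2)) \<partial>\<mu>) * indicator S y \<partial>\<mu>)"
      by (rule nn_integral_multc[symmetric]) (auto simp: G_def)
    also have "\<dots> = (\<integral>\<^sup>+ a. (\<integral>\<^sup>+ b. ennreal (G (y - (a + b)/2)) * indicator S y \<partial>\<mu>) \<partial>\<mu>)"
      by (intro nn_integral_cong nn_integral_multc[symmetric]) (auto simp: G_def)
    also have "\<dots> = (\<integral>\<^sup>+ ab. ennreal (G (y - (fst ab + snd ab)/2)) * indicator S y \<partial>(\<mu> \<Otimes>\<^sub>M \<mu>))"
      by (subst Mu.nn_integral_fst[symmetric]) (auto simp: G_def)
    finally show "(\<integral>\<^sup>+ ab. ennreal (G (y - (fst ab + snd ab)/2)) * indicator S y \<partial>(\<mu> \<Otimes>\<^sub>M \<mu>)) = (\<integral>\<^sup>+ a. \<integral>\<^sup>+ b. ennreal (G (y - (a + b)/2)) \<partial>\<mu> \<partial>\<mu>) * indicator S y" by simp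
  qed
  also have "\<dots> = emeasure (T_op A \<mu>) S"
    unfolding T_op_def G_def by (subst emeasure_density) auto
  finally show "emeasure (distr ((\<pi> \<Otimes>\<^sub>M \<pi>) \<Otimes>\<^sub>M density lborel (\<lambda>x. ennreal (Gamma_half A x))) borel
        (\<lambda>x. (h (fst (fst x)) + h (snd (fst x)))/2 + snd x)) S = emeasure (T_op A \<mu>) S" unfolding N_def .
qed


lemma cost:
  fixes \<pi> :: "(real \<times> real) measure" and N :: "real measure"
  assumes pi: "prob_space \<pi>" and spi: "sets \<pi> = sets (borel :: (real\<times>real) measure)"
    and Np: "prob_space N" and sN[measurable_cong]: "sets N = sets borel"
    and int2: "integrable \<pi> (\<lambda>p. (fst p - snd p)\<^sup>2)" and int1: "integrable \<pi> (\<lambda>p. fst p - snd p)"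
    and mean: "(\<integral>p. fst p - snd p \<partial>\<pi>) = 0"
  shows "(\<integral>\<^sup>+ w. ennreal ((fst w - snd w)\<^sup>2) \<partial>distr ((\<pi> \<Otimes>\<^sub>M \<pi>) \<Otimes>\<^sub>M N) borel
      (\<lambda>x. ((fst (fst (fst x)) + fst (snd (fst x)))/2 + snd x, (snd (fst (fst x)) + snd (snd (fst x)))/2 + snd x)))
    = ennreal ((\<integral>p. (fst p - snd p)\<^sup>2 \<partial>\<pi>) / 2)"
proof -
  define d where "d = (\<lambda>p::real\<times>real. fst p - snd p)"
  define E where "E = (\<integral>p. (d p)\<^sup>2 \<partial>\<pi>)"
  interpret N: prob_space N by (rule Np)
  interpret P: prob_space \<pi> by (rule pi)
  interpret PP: pair_sigma_finite \<pi> \<pi> ..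
  interpret PPN: pair_sigma_finite "\<pi> \<Otimes>\<^sub>M \<pi>" N
    using prob_space_pair[OF pi pi] N.prob_space_axioms
    by (simp add: pair_sigma_finite_def prob_space_imp_sigma_finite)
  have spi2: "sets \<pi> = sets (borel \<Otimes>\<^sub>M borel)" using spi by (simp only: borel_prod)
  have sM: "sets ((\<pi> \<Otimes>\<^sub>M \<pi>) \<Otimes>\<^sub>M N) = sets (((borel \<Otimes>\<^sub>M borel) \<Otimes>\<^sub>M (borel \<Otimes>\<^sub>M borel)) \<Otimes>\<^sub>M borel)"
    by (intro sets_pair_measure_cong spi2 sN)
  have sPP: "sets (\<pi> \<Otimes>\<^sub>M \<pi>) = sets ((borel \<Otimes>\<^sub>M borel) \<Otimes>\<^sub>M (borel \<Otimes>\<^sub>M borel))"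
    by (intro sets_pair_measure_cong spi2)
  have gm: "(\<lambda>x. ((fst (fst (fst x)) + fst (snd (fst x)))/2 + snd x, (snd (fst (fst x)) + snd (snd (fst x)))/2 + snd x))
      \<in> measurable ((\<pi> \<Otimes>\<^sub>M \<pi>) \<Otimes>\<^sub>M N) (borel :: (real\<times>real) measure)"
    unfolding borel_prod[symmetric] by (subst measurable_cong_sets[OF sM refl]) measurable
  have dm[measurable]: "d \<in> borel_measurable \<pi>"
    unfolding d_def by (subst measurable_cong_sets[OF spi2 refl]) measurable
  have int2': "integrable \<pi> (\<lambda>p. (d p)\<^sup>2)" using int2 by (simp add: d_def)
  have int1': "integrable \<pi> d" using int1 by (simp add: d_def[abs_def])
  have mean': "(\<integral>p. d p \<partial>\<pi>) = 0" using mean by (simp add: d_def)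
  have inner: "(\<integral>\<^sup>+ q. ennreal (((a + d q)/2)\<^sup>2) \<partial>\<pi>) = ennreal ((a\<^sup>2 + E)/4)" for a
  proof -
    have eq: "((a + d q)/2)\<^sup>2 = a\<^sup>2/4 + (a/2) * d q + (d q)\<^sup>2/4" for q
      by (simp add: power2_eq_square field_simps)
    have ii: "integrable \<pi> (\<lambda>q. a\<^sup>2/4 + (a/2) * d q + (d q)\<^sup>2/4)"
      using int1' int2' by auto
    have "(\<integral>q. a\<^sup>2/4 + (a/2) * d q + (d q)\<^sup>2/4 \<partial>\<pi>) = a\<^sup>2/4 + (a/2) * 0 + E/4"
      using int1' int2' ii unfolding E_def mean'[symmetric] by (simp add: P.prob_space)
    moreover have nn: "0 \<le> a\<^sup>2/4 + (a/2) * d q + (d q)\<^sup>2/4" for q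
      using eq[of q] by (metis zero_le_power2)
    moreover have "(\<integral>\<^sup>+ q. ennreal (a\<^sup>2/4 + (a/2) * d q + (d q)\<^sup>2/4) \<partial>\<pi>)
        = ennreal (\<integral>q. a\<^sup>2/4 + (a/2) * d q + (d q)\<^sup>2/4 \<partial>\<pi>)"
      by (rule nn_integral_eq_integral[OF ii], rule AE_I2, rule nn)
    ultimately show ?thesis
      unfolding eq by (simp add: add_divide_distrib)
  qed
  have "(\<integral>\<^sup>+ w. ennreal ((fst w - snd w)\<^sup>2) \<partial>distr ((\<pi> \<Otimes>\<^sub>M \<pi>) \<Otimes>\<^sub>M N) borel
      (\<lambda>x. ((fst (fst (fst x)) + fst (snd (fst x)))/2 + snd x, (snd (fst (fst x)) + snd (snd (fst x)))/2 + snd x)))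
     = (\<integral>\<^sup>+ x. ennreal (((d (fst (fst x)) + d (snd (fst x)))/2)\<^sup>2) \<partial>((\<pi> \<Otimes>\<^sub>M \<pi>) \<Otimes>\<^sub>M N))"
  proof -
    have m: "(\<lambda>w::real\<times>real. ennreal ((fst w - snd w)\<^sup>2)) \<in> borel_measurable borel"
      unfolding borel_prod[symmetric] by measurable
    have aux: "((x1::real)+x2)/2+z - ((y1+y2)/2+z) = ((x1-y1)+(x2-y2))/2" for x1 x2 y1 y2 z
      by (simp add: field_simps)
    show ?thesis
      by (subst nn_integral_distr[OF gm]) (simp add: m, simp only: aux d_def fst_conv snd_conv)
  qed
  also have "\<dots> = (\<integral>\<^sup>+ pq. \<integral>\<^sup>+ z. ennreal (((d (fst pq) + d (snd pq))/2)\<^sup>2) \<partial>N \<partial>(\<pi> \<Otimes>\<^sub>M \<pi>))"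
  proof -
    have "(\<lambda>x. ennreal (((d (fst (fst x)) + d (snd (fst x)))/2)\<^sup>2)) \<in> borel_measurable ((\<pi> \<Otimes>\<^sub>M \<pi>) \<Otimes>\<^sub>M N)"
      unfolding d_def by (subst measurable_cong_sets[OF sM refl]) measurable
    then show ?thesis by (subst N.nn_integral_fst[symmetric]) auto
  qed
  also have "\<dots> = (\<integral>\<^sup>+ pq. ennreal (((d (fst pq) + d (snd pq))/2)\<^sup>2) \<partial>(\<pi> \<Otimes>\<^sub>M \<pi>))"
    by (simp add: N.emeasure_space_1)
  also have "\<dots> = (\<integral>\<^sup>+ p. \<integral>\<^sup>+ q. ennreal (((d p + d q)/2)\<^sup>2) \<partial>\<pi> \<partial>\<pi>)"
  proof -
    have "(\<lambda>x. ennreal (((d (fst x) + d (snd x))/2)\<^sup>2)) \<in> borel_measurable (\<pi> \<Otimes>\<^sub>M \<pi>)"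
      unfolding d_def by (subst measurable_cong_sets[OF sPP refl]) measurable
    then show ?thesis by (subst P.nn_integral_fst[symmetric]) auto
  qed
  also have "\<dots> = (\<integral>\<^sup>+ p. ennreal (((d p)\<^sup>2 + E)/4) \<partial>\<pi>)"
    by (simp add: inner)
  also have "\<dots> = ennreal (\<integral>p. ((d p)\<^sup>2 + E)/4 \<partial>\<pi>)"
    using int2' by (subst nn_integral_eq_integral) (auto simp: add_nonneg_nonneg E_def)
  also have "(\<integral>p. ((d p)\<^sup>2 + E)/4 \<partial>\<pi>) = (E + E)/4"
    using int2' by (simp add: E_def P.prob_space)
  finally show ?thesis by (simp add: E_def d_def)
qed


lemma abs_le_sq1: "\<bar>y::real\<bar> \<le> 1 + y\<^sup>2"
proof -
  have "0 \<le> (\<bar>y\<bar> - 1/2)\<^sup>2" by simp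
  also have "(\<bar>y\<bar> - 1/2)\<^sup>2 = y\<^sup>2 - \<bar>y\<bar> + 1/4"
    by (simp add: power2_eq_square algebra_simps abs_mult_self_eq)
  finally show ?thesis by simp
qed

lemma sq_diff_le: "((a::real) - b)\<^sup>2 \<le> 2 * a\<^sup>2 + 2 * b\<^sup>2"
proof -
  have "0 \<le> (a + b)\<^sup>2" by simp
  then show ?thesis by (simp add: power2_eq_square algebra_simps)
qed

lemma coupling_facts:
  fixes \<pi> :: "(real \<times> real) measure"
  assumes c: "\<pi> \<in> couplings n m" and n: "prob_2 n" and m: "prob_2 m"
  shows "integrable \<pi> (\<lambda>p. (fst p - snd p)\<^sup>2)" "integrable \<pi> (\<lambda>p. fst p - snd p)"
    "(\<integral>p. fst p - snd p \<partial>\<pi>) = (\<integral>y. y \<partial>n) - (\<integral>y. y \<partial>m)"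
    "(\<integral>\<^sup>+ p. ennreal ((fst p - snd p)\<^sup>2) \<partial>\<pi>) = ennreal (\<integral>p. (fst p - snd p)\<^sup>2 \<partial>\<pi>)"
proof -
  have pi: "prob_space \<pi>" and spi: "sets \<pi> = sets (borel :: (real\<times>real) measure)"
    and dn: "distr \<pi> borel fst = n" and dm: "distr \<pi> borel snd = m"
    using c unfolding couplings_def by auto
  interpret P: prob_space \<pi> by (rule pi)
  have spi2: "sets \<pi> = sets (borel \<Otimes>\<^sub>M borel)" using spi by (simp only: borel_prod)
  have [measurable]: "fst \<in> borel_measurable \<pi>" "snd \<in> borel_measurable \<pi>"
    by (subst measurable_cong_sets[OF spi2 refl], measurable)+
  have n2: "integrable n (\<lambda>y. y\<^sup>2)" and m2: "integrable m (\<lambda>y. y\<^sup>2)"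
    and pn: "prob_space n" and pm: "prob_space m"
    using n m unfolding prob_2_def by auto
  have f2: "integrable \<pi> (\<lambda>p. (fst p)\<^sup>2)"
    using n2 integrable_distr_eq[of fst \<pi> borel "\<lambda>y. y\<^sup>2"] dn by simp
  have s2: "integrable \<pi> (\<lambda>p. (snd p)\<^sup>2)"
    using m2 integrable_distr_eq[of snd \<pi> borel "\<lambda>y. y\<^sup>2"] dm by simp
  have f1: "integrable \<pi> fst"
    by (rule Bochner_Integration.integrable_bound[of _ "\<lambda>p. 1 + (fst p)\<^sup>2"])
       (use f2 abs_le_sq1 in auto)
  have s1: "integrable \<pi> snd"
    by (rule Bochner_Integration.integrable_bound[of _ "\<lambda>p. 1 + (snd p)\<^sup>2"])
       (use s2 abs_le_sq1 in auto)
  show i2: "integrable \<pi> (\<lambda>p. (fst p - snd p)\<^sup>2)"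
    by (rule Bochner_Integration.integrable_bound[of _ "\<lambda>p. 2 * (fst p)\<^sup>2 + 2 * (snd p)\<^sup>2"])
       (use f2 s2 sq_diff_le in auto)
  show "integrable \<pi> (\<lambda>p. fst p - snd p)" using f1 s1 by auto
  have "(\<integral>p. fst p - snd p \<partial>\<pi>) = (\<integral>p. fst p \<partial>\<pi>) - (\<integral>p. snd p \<partial>\<pi>)"
    using f1 s1 by (simp add: Bochner_Integration.integral_diff)
  also have "(\<integral>p. fst p \<partial>\<pi>) = (\<integral>y. y \<partial>n)"
    unfolding dn[symmetric] by (subst integral_distr) auto
  also have "(\<integral>p. snd p \<partial>\<pi>) = (\<integral>y. y \<partial>m)"
    unfolding dm[symmetric] by (subst integral_distr) auto
  finally show "(\<integral>p. fst p - snd p \<partial>\<pi>) = (\<integral>y. y \<partial>n) - (\<integral>y. y \<partial>m)" .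
  show "(\<integral>\<^sup>+ p. ennreal ((fst p - snd p)\<^sup>2) \<partial>\<pi>) = ennreal (\<integral>p. (fst p - snd p)\<^sup>2 \<partial>\<pi>)"
    using i2 by (subst nn_integral_eq_integral) auto
qed


lemma prod_coupling:
  assumes n: "prob_2 n" and m: "prob_2 m"
  shows "n \<Otimes>\<^sub>M m \<in> couplings n m"
proof -
  have pn: "prob_space n" and pm: "prob_space m" and sn[measurable_cong]: "sets n = sets borel"
    and sm[measurable_cong]: "sets m = sets borel"
    using n m unfolding prob_2_def by auto
  interpret N: prob_space n by (rule pn)
  interpret M: prob_space m by (rule pm)
  interpret NM: pair_sigma_finite n m ..
  have spn: "space n = UNIV" using sets_eq_imp_space_eq[OF sn] by simp
  have spm: "space m = UNIV" using sets_eq_imp_space_eq[OF sm] by simp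
  have sp: "sets (n \<Otimes>\<^sub>M m) = sets (borel :: (real\<times>real) measure)"
    unfolding borel_prod[symmetric] by (intro sets_pair_measure_cong sn sm)
  have "distr (n \<Otimes>\<^sub>M m) borel fst = n"
  proof (rule measure_eqI)
    fix S assume "S \<in> sets (distr (n \<Otimes>\<^sub>M m) borel fst)"
    then have S: "S \<in> sets borel" by simp
    have "emeasure (distr (n \<Otimes>\<^sub>M m) borel fst) S = emeasure (n \<Otimes>\<^sub>M m) (S \<times> space m)"
      using S by (subst emeasure_distr) (auto simp: space_pair_measure spn spm intro!: arg_cong2[where f=emeasure])
    also have "\<dots> = emeasure n S" using S sn sm
      by (subst M.emeasure_pair_measure_Times) (auto simp: M.emeasure_space_1)
    finally show "emeasure (distr (n \<Otimes>\<^sub>M m) borel fst) S = emeasure n S" .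
  qed (simp add: sn)
  moreover have "distr (n \<Otimes>\<^sub>M m) borel snd = m"
  proof (rule measure_eqI)
    fix S assume "S \<in> sets (distr (n \<Otimes>\<^sub>M m) borel snd)"
    then have S: "S \<in> sets borel" by simp
    have "emeasure (distr (n \<Otimes>\<^sub>M m) borel snd) S = emeasure (n \<Otimes>\<^sub>M m) (space n \<times> S)"
      using S by (subst emeasure_distr) (auto simp: space_pair_measure spn spm intro!: arg_cong2[where f=emeasure])
    also have "\<dots> = emeasure m S" using S sn sm
      by (subst M.emeasure_pair_measure_Times) (auto simp: N.emeasure_space_1)
    finally show "emeasure (distr (n \<Otimes>\<^sub>M m) borel snd) S = emeasure m S" .
  qed (simp add: sm)
  ultimately show ?thesis
    unfolding couplings_def using prob_space_pair[OF pn pm] sp by auto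
qed


theorem theorem2:
  fixes A :: real and n m :: "real measure"
  assumes "A > 0"
    and "prob_2 n" and "prob_2 m"
    and "(\<integral>y. y \<partial>n) = (\<integral>y. y \<partial>m)"
  shows "W2 (T_op A n) (T_op A m) \<le> (1 / sqrt 2) * W2 n m"
proof -
  note A = assms(1) and n = assms(2) and m = assms(3) and mean = assms(4)
  define N where "N = density lborel (\<lambda>x. ennreal (Gamma_half A x))"
  have Np: "prob_space N" unfolding N_def by (rule prob_space_Gamma[OF A])
  have sN[measurable_cong]: "sets N = sets borel" unfolding N_def by simp
  have pn: "prob_space n" and pm: "prob_space m" and sn: "sets n = sets borel"
    and sm: "sets m = sets borel"
    using n m unfolding prob_2_def by auto
  define X where "X = W2_sq (T_op A n) (T_op A m)"
  define Y where "Y = W2_sq n m"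
  define c where "c = (\<lambda>\<pi>::(real\<times>real) measure. \<integral>\<^sup>+ p. ennreal ((fst p - snd p)\<^sup>2) \<partial>\<pi>)"
  have key: "2 * X \<le> c \<pi> \<and> c \<pi> < \<infinity>" if pic: "\<pi> \<in> couplings n m" for \<pi>
  proof -
    have pi: "prob_space \<pi>" and spi: "sets \<pi> = sets (borel :: (real\<times>real) measure)"
      and dn: "distr \<pi> borel fst = n" and dm: "distr \<pi> borel snd = m"
      using pic unfolding couplings_def by auto
    note cf = coupling_facts[OF pic n m]
    define E where "E = (\<integral>p. (fst p - snd p)\<^sup>2 \<partial>\<pi>)"
    have E0: "E \<ge> 0" unfolding E_def by simp
    have cE: "c \<pi> = ennreal E" unfolding c_def E_def by (rule cf(4))
    define g where "g = (\<lambda>x::((real\<times>real)\<times>(real\<times>real))\<times>real.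
       ((fst (fst (fst x)) + fst (snd (fst x)))/2 + snd x, (snd (fst (fst x)) + snd (snd (fst x)))/2 + snd x))"
    define \<kappa> where "\<kappa> = distr ((\<pi> \<Otimes>\<^sub>M \<pi>) \<Otimes>\<^sub>M N) borel g"
    have spi2: "sets \<pi> = sets (borel \<Otimes>\<^sub>M borel)" using spi by (simp only: borel_prod)
    have sM: "sets ((\<pi> \<Otimes>\<^sub>M \<pi>) \<Otimes>\<^sub>M N) = sets (((borel \<Otimes>\<^sub>M borel) \<Otimes>\<^sub>M (borel \<Otimes>\<^sub>M borel)) \<Otimes>\<^sub>M borel)"
      by (intro sets_pair_measure_cong spi2 sN)
    have gm[measurable]: "g \<in> measurable ((\<pi> \<Otimes>\<^sub>M \<pi>) \<Otimes>\<^sub>M N) (borel :: (real\<times>real) measure)"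
      unfolding borel_prod[symmetric] g_def by (subst measurable_cong_sets[OF sM refl]) measurable
    have fstm: "fst \<in> borel_measurable (borel :: (real\<times>real) measure)"
      and sndm: "snd \<in> borel_measurable (borel :: (real\<times>real) measure)"
      unfolding borel_prod[symmetric] by measurable
    have pM: "prob_space ((\<pi> \<Otimes>\<^sub>M \<pi>) \<Otimes>\<^sub>M N)"
      by (intro prob_space_pair pi Np)
    have "distr \<kappa> borel fst = distr ((\<pi> \<Otimes>\<^sub>M \<pi>) \<Otimes>\<^sub>M N) borel
            (\<lambda>x. (fst (fst (fst x)) + fst (snd (fst x)))/2 + snd x)"
      unfolding \<kappa>_def by (subst distr_distr[OF fstm gm]) (simp add: g_def comp_def)
    also have "\<dots> = T_op A n"
      unfolding N_def by (rule marg[OF A pi spi fstm dn pn sn])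
    finally have k1: "distr \<kappa> borel fst = T_op A n" .
    have "distr \<kappa> borel snd = distr ((\<pi> \<Otimes>\<^sub>M \<pi>) \<Otimes>\<^sub>M N) borel
            (\<lambda>x. (snd (fst (fst x)) + snd (snd (fst x)))/2 + snd x)"
      unfolding \<kappa>_def by (subst distr_distr[OF sndm gm]) (simp add: g_def comp_def)
    also have "\<dots> = T_op A m"
      unfolding N_def by (rule marg[OF A pi spi sndm dm pm sm])
    finally have k2: "distr \<kappa> borel snd = T_op A m" .
    have kc: "\<kappa> \<in> couplings (T_op A n) (T_op A m)"
      unfolding couplings_def using k1 k2 prob_space.prob_space_distr[OF pM gm]
      by (simp add: \<kappa>_def)
    have "X \<le> c \<kappa>"
      unfolding X_def W2_sq_def c_def by (rule INF_lower[OF kc])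
    also have "c \<kappa> = ennreal (E / 2)"
      unfolding c_def \<kappa>_def g_def E_def
      by (rule cost[OF pi spi Np sN cf(1) cf(2)]) (simp add: cf(3) mean)
    finally have "2 * X \<le> 2 * ennreal (E / 2)" by (intro mult_left_mono) auto
    also have "2 * ennreal (E / 2) = ennreal E"
      using E0 by (subst ennreal_numeral[symmetric], subst ennreal_mult[symmetric]) auto
    finally show ?thesis using cE by simp
  qed
  have XY: "2 * X \<le> Y"
    unfolding Y_def W2_sq_def using key unfolding c_def by (intro INF_greatest) auto
  have Yfin: "Y < \<infinity>"
  proof -
    have "Y \<le> c (n \<Otimes>\<^sub>M m)"
      unfolding Y_def W2_sq_def c_def by (rule INF_lower[OF prod_coupling[OF n m]])
    also have "\<dots> < \<infinity>" using key[OF prod_coupling[OF n m]] by simp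
    finally show ?thesis .
  qed
  have "enn2real (2 * X) \<le> enn2real Y" using XY Yfin by (simp add: enn2real_mono)
  then have "2 * enn2real X \<le> enn2real Y" by (simp add: enn2real_mult)
  then have "enn2real X \<le> enn2real Y / 2" by simp
  then have "sqrt (enn2real X) \<le> sqrt (enn2real Y / 2)" by (rule real_sqrt_le_mono)
  also have "sqrt (enn2real Y / 2) = (1 / sqrt 2) * sqrt (enn2real Y)"
    by (simp add: real_sqrt_divide)
  finally show ?thesis unfolding W2_def X_def Y_def .
qed

end
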